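(* For every normal PO-dilator $W$ and every partial order $X$, the relation $\leq_{\mathcal T W(X)}$ is a partial order on $\mathcal T W(X)$.
   Context: A quasi embedding between partial orders $X,Y$ is a function $f$ with $f(x)\leq_Y f(y)\Rightarrow x\leq_X y$; an embedding also satisfies the converse. $\mathrm{PO}$ is the category of partial orders and quasi embeddings. $[X]^{<\omega}$ denotes the finite subsets of $X$, with $[f]^{<\omega}(a)=\{f(x)\mid x\in a\}$; subsets of partial orders are regarded as suborders and $\iota_a$ denotes an inclusion map. A PO-dilator is a functor $W:\mathrm{PO}\to\mathrm{PO}$ mapping embeddings to embeddings, with a natural transformation $\operatorname{supp}^W:W\Rightarrow[\cdot]^{<\omega}$ such that for every embedding $f:X\to Y$, $\operatorname{rng}(W(f))=\{\sigma\in W(Y)\mid\operatorname{supp}^W_Y(\sigma)\subseteq\operatorname{rng}(f)\}$. For finite $a,b\subseteq X$, $a\leq^{\mathrm{fin}}_X b$ iff every $x\in a$ has some $y\in b$ with $x\leq_X y$. $W$ is normal if $\sigma\leq_{W(X)}\tau$ implies $\operatorname{supp}^W_X(\sigma)\leq^{\mathrm{fin}}_X\operatorname{supp}^W_X(\tau)$. For a normal PO-dilator $W$ and partial order $X$, the set $\mathcal T W(X)$ and relation $\leq_{\mathcal T W(X)}$ are defined by simultaneous recursion. Terms: (i) $\overline x$ for each $x\in X$; (ii) for each finite $a\subseteq\mathcal T W(X)$ on which the restriction of $\leq_{\mathcal T W(X)}$ is a partial order, and each $\sigma\in W(a)$ with $\operatorname{supp}^W_a(\sigma)=a$, a term $\circ(a,\sigma)$.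 Relation: $s\leq_{\mathcal T W(X)}t$ iff (i') $s=\overline x$, $t=\overline y$, $x\leq_X y$; or (ii') $t=\circ(b,\tau)$ and $s\leq_{\mathcal T W(X)}t'$ for some $t'\in b$; or (iii') $s=\circ(a,\sigma)$, $t=\circ(b,\tau)$, the restriction of $\leq_{\mathcal T W(X)}$ to $a\cup b$ is a partial order, and $W(\iota_a)(\sigma)\leq_{W(a\cup b)}W(\iota_b)(\tau)$ for the inclusions $\iota_a:a\hookrightarrow a\cup b$, $\iota_b:b\hookrightarrow a\cup b$. (The recursion is along the length $l(\overline x)=0$, $l(\circ(a,\sigma))=1+\sum_{r\in a}2\,l(r)$.) *)

theory Defs
  imports Main "HOL-Library.FSet"
begin

text \<open>A partial order is represented by its relation r; its carrier is Field r
  (reflexivity makes every element of the carrier appear in r).\<close>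

definition po :: "'a rel \<Rightarrow> bool" where
  "po r \<longleftrightarrow> partial_order_on (Field r) r"

definition quasi_emb :: "'a rel \<Rightarrow> 'b rel \<Rightarrow> ('a \<Rightarrow> 'b) \<Rightarrow> bool" where
  "quasi_emb r s f \<longleftrightarrow> f ` Field r \<subseteq> Field s \<and>
     (\<forall>x\<in>Field r. \<forall>y\<in>Field r. (f x, f y) \<in> s \<longrightarrow> (x, y) \<in> r)"

definition emb :: "'a rel \<Rightarrow> 'b rel \<Rightarrow> ('a \<Rightarrow> 'b) \<Rightarrow> bool" where
  "emb r s f \<longleftrightarrow> f ` Field r \<subseteq> Field s \<and>
     (\<forall>x\<in>Field r. \<forall>y\<in>Field r. (f x, f y) \<in> s \<longleftrightarrow> (x, y) \<in> r)"

text \<open>A functor W on partial orders (with carriers in the type 'a) is given by its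
  object part Wo (the partial order W(X)), its morphism part Wm (Wm r s f is W(f) for a
  quasi embedding f from r to s) and the support transformation supp.\<close>

definition PO_dilator ::
  "('a rel \<Rightarrow> 'w rel) \<Rightarrow> ('a rel \<Rightarrow> 'a rel \<Rightarrow> ('a \<Rightarrow> 'a) \<Rightarrow> 'w \<Rightarrow> 'w)
    \<Rightarrow> ('a rel \<Rightarrow> 'w \<Rightarrow> 'a set) \<Rightarrow> bool" where
  "PO_dilator Wo Wm supp \<longleftrightarrow>
     \<comment> \<open>W maps partial orders to partial orders\<close>
     (\<forall>r. po r \<longrightarrow> po (Wo r)) \<and>
     \<comment> \<open>W maps quasi embeddings to quasi embeddings\<close>
     (\<forall>r s f. po r \<and> po s \<and> quasi_emb r s f \<longrightarrow> quasi_emb (Wo r) (Wo s) (Wm r s f)) \<and>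
     \<comment> \<open>W(f) only depends on f as a function on the carrier\<close>
     (\<forall>r s f g. po r \<and> po s \<and> quasi_emb r s f \<and> (\<forall>x\<in>Field r. f x = g x) \<longrightarrow>
        (\<forall>\<sigma>\<in>Field (Wo r). Wm r s f \<sigma> = Wm r s g \<sigma>)) \<and>
     \<comment> \<open>functoriality: identities\<close>
     (\<forall>r. po r \<longrightarrow> (\<forall>\<sigma>\<in>Field (Wo r). Wm r r id \<sigma> = \<sigma>)) \<and>
     \<comment> \<open>functoriality: composition\<close>
     (\<forall>r s t f g. po r \<and> po s \<and> po t \<and> quasi_emb r s f \<and> quasi_emb s t g \<longrightarrow>
        (\<forall>\<sigma>\<in>Field (Wo r). Wm r t (g \<circ> f) \<sigma> = Wm s t g (Wm r s f \<sigma>))) \<and>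
     \<comment> \<open>W maps embeddings to embeddings\<close>
     (\<forall>r s f. po r \<and> po s \<and> emb r s f \<longrightarrow> emb (Wo r) (Wo s) (Wm r s f)) \<and>
     \<comment> \<open>supp is a natural transformation W \<Rightarrow> [.]^{<omega}\<close>
     (\<forall>r. po r \<longrightarrow> (\<forall>\<sigma>\<in>Field (Wo r). finite (supp r \<sigma>) \<and> supp r \<sigma> \<subseteq> Field r)) \<and>
     (\<forall>r s f. po r \<and> po s \<and> quasi_emb r s f \<longrightarrow>
        (\<forall>\<sigma>\<in>Field (Wo r). supp s (Wm r s f \<sigma>) = f ` supp r \<sigma>)) \<and>
     \<comment> \<open>support condition\<close>
     (\<forall>r s f. po r \<and> po s \<and> emb r s f \<longrightarrow>
        Wm r s f ` Field (Wo r) = {\<sigma> \<in> Field (Wo s). supp s \<sigma> \<subseteq> f ` Field r})"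

definition le_fin :: "'a rel \<Rightarrow> 'a set \<Rightarrow> 'a set \<Rightarrow> bool" where
  "le_fin r a b \<longleftrightarrow> (\<forall>x\<in>a. \<exists>y\<in>b. (x, y) \<in> r)"

definition normal_PO_dilator ::
  "('a rel \<Rightarrow> 'w rel) \<Rightarrow> ('a rel \<Rightarrow> 'a rel \<Rightarrow> ('a \<Rightarrow> 'a) \<Rightarrow> 'w \<Rightarrow> 'w)
    \<Rightarrow> ('a rel \<Rightarrow> 'w \<Rightarrow> 'a set) \<Rightarrow> bool" where
  "normal_PO_dilator Wo Wm supp \<longleftrightarrow> PO_dilator Wo Wm supp \<and>
     (\<forall>r \<sigma> \<tau>. po r \<and> (\<sigma>, \<tau>) \<in> Wo r \<longrightarrow> le_fin r (supp r \<sigma>) (supp r \<tau>))"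

datatype ('x, 'w) tm = Bar 'x | Circ "('x, 'w) tm fset" 'w

lemma size_tm_fmember:
  "x |\<in>| a \<Longrightarrow> size x < Suc (\<Sum>x\<in>fset a. Suc (size x))"
proof -
  assume "x |\<in>| a"
  then have "Suc (size x) \<le> (\<Sum>x\<in>fset a. Suc (size x))"
    by (intro member_le_sum) auto
  then show ?thesis by simp
qed

function tlen :: "('x, 'w) tm \<Rightarrow> nat" where
  "tlen (Bar x) = 0"
| "tlen (Circ a \<sigma>) = 1 + (\<Sum>r\<in>fset a. 2 * tlen r)"
  by pat_completeness auto
termination
  by (relation "measure size") (auto intro: size_tm_fmember)

definition restr_rel :: "('a \<Rightarrow> 'a \<Rightarrow> bool) \<Rightarrow> 'a set \<Rightarrow> 'a rel" where
  "restr_rel le A = {(r, r'). r \<in> A \<and> r' \<in> A \<and> le r r'}"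

lemma restr_rel_cong[fundef_cong]:
  "A = B \<Longrightarrow> (\<And>r r'. r \<in> B \<Longrightarrow> r' \<in> B \<Longrightarrow> le r r' = le' r r') \<Longrightarrow>
    restr_rel le A = restr_rel le' B"
  unfolding restr_rel_def by auto

lemma tlen_mem_less:
  assumes "r \<in> fset a" shows "tlen r < tlen (Circ a \<sigma>)"
proof -
  have "2 * tlen r \<le> (\<Sum>r\<in>fset a. 2 * tlen r)"
    using assms by (intro member_le_sum) auto
  then show ?thesis by simp
qed

lemma tlen_mem2_less:
  assumes "r \<in> fset a" "r' \<in> fset a" shows "tlen r + tlen r' < tlen (Circ a \<sigma>)"
proof (cases "r = r'")
  case True
  have "2 * tlen r \<le> (\<Sum>r\<in>fset a. 2 * tlen r)"
    using assms by (intro member_le_sum) auto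
  then show ?thesis using True by simp
next
  case False
  have "(\<Sum>x\<in>{r, r'}. 2 * tlen x) \<le> (\<Sum>r\<in>fset a. 2 * tlen r)"
    using assms by (intro sum_mono2) auto
  then show ?thesis using False by simp
qed

lemma tlen_pair_less:
  assumes "r \<in> fset a \<union> fset b" "r' \<in> fset a \<union> fset b"
  shows "tlen r + tlen r' < tlen (Circ a \<sigma>) + tlen (Circ b \<tau>)"
  using assms tlen_mem_less[of r a \<sigma>] tlen_mem_less[of r b \<tau>]
      tlen_mem_less[of r' a \<sigma>] tlen_mem_less[of r' b \<tau>]
      tlen_mem2_less[of r a r' \<sigma>] tlen_mem2_less[of r b r' \<tau>]
  by auto

lemma Bex_fset_cong[fundef_cong]:
  "A = B \<Longrightarrow> (\<And>x. x \<in> fset B \<Longrightarrow> P x = Q x) \<Longrightarrow> (\<exists>x\<in>fset A. P x) = (\<exists>x\<in>fset B. Q x)"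
  by auto

text \<open>The relation of TW(X) (before restricting to the terms of TW(X)), by recursion
  along tlen s + tlen t, as in clauses (i'), (ii'), (iii'). The inclusions
  iota_a, iota_b into a \<union> b are represented by the identity function.\<close>

function twle ::
  "'x rel \<Rightarrow> (('x, 'w) tm rel \<Rightarrow> 'w rel)
    \<Rightarrow> (('x, 'w) tm rel \<Rightarrow> ('x, 'w) tm rel \<Rightarrow> (('x, 'w) tm \<Rightarrow> ('x, 'w) tm) \<Rightarrow> 'w \<Rightarrow> 'w)
    \<Rightarrow> ('x, 'w) tm \<Rightarrow> ('x, 'w) tm \<Rightarrow> bool" where
  "twle X Wo Wm (Bar x) (Bar y) \<longleftrightarrow> (x, y) \<in> X"
| "twle X Wo Wm (Circ a \<sigma>) (Bar y) \<longleftrightarrow> False"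
| "twle X Wo Wm (Bar x) (Circ b \<tau>) \<longleftrightarrow> (\<exists>t'\<in>fset b. twle X Wo Wm (Bar x) t')"
| "twle X Wo Wm (Circ a \<sigma>) (Circ b \<tau>) \<longleftrightarrow>
     (\<exists>t'\<in>fset b. twle X Wo Wm (Circ a \<sigma>) t') \<or>
     (partial_order_on (fset a \<union> fset b) (restr_rel (twle X Wo Wm) (fset a \<union> fset b)) \<and>
      (Wm (restr_rel (twle X Wo Wm) (fset a)) (restr_rel (twle X Wo Wm) (fset a \<union> fset b)) id \<sigma>,
       Wm (restr_rel (twle X Wo Wm) (fset b)) (restr_rel (twle X Wo Wm) (fset a \<union> fset b)) id \<tau>)
        \<in> Wo (restr_rel (twle X Wo Wm) (fset a \<union> fset b)))"
  by pat_completeness auto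
termination
  by (relation "measure (\<lambda>(X, Wo, Wm, s, t). tlen s + tlen t)")
     (auto simp del: tlen.simps intro: tlen_mem_less tlen_pair_less)

function twmem ::
  "'x rel \<Rightarrow> (('x, 'w) tm rel \<Rightarrow> 'w rel)
    \<Rightarrow> (('x, 'w) tm rel \<Rightarrow> ('x, 'w) tm rel \<Rightarrow> (('x, 'w) tm \<Rightarrow> ('x, 'w) tm) \<Rightarrow> 'w \<Rightarrow> 'w)
    \<Rightarrow> (('x, 'w) tm rel \<Rightarrow> 'w \<Rightarrow> ('x, 'w) tm set)
    \<Rightarrow> ('x, 'w) tm \<Rightarrow> bool" where
  "twmem X Wo Wm supp (Bar x) \<longleftrightarrow> x \<in> Field X"
| "twmem X Wo Wm supp (Circ a \<sigma>) \<longleftrightarrow>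
     (\<forall>r\<in>fset a. twmem X Wo Wm supp r) \<and>
     partial_order_on (fset a) (restr_rel (twle X Wo Wm) (fset a)) \<and>
     \<sigma> \<in> Field (Wo (restr_rel (twle X Wo Wm) (fset a))) \<and>
     supp (restr_rel (twle X Wo Wm) (fset a)) \<sigma> = fset a"
  by pat_completeness auto
termination
  by (relation "measure (\<lambda>(X, Wo, Wm, supp, s). tlen s)")
     (auto simp del: tlen.simps intro: tlen_mem_less)

definition TW where
  "TW X Wo Wm supp = {s. twmem X Wo Wm supp s}"

definition TW_le where
  "TW_le X Wo Wm supp = {(s, t). s \<in> TW X Wo Wm supp \<and> t \<in> TW X Wo Wm supp \<and> twle X Wo Wm s t}"

end

theory Submission
  imports Defs
begin

function ht :: "('x, 'w) tm \<Rightarrow> nat" where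
  "ht (Bar x) = 0"
| "ht (Circ a \<sigma>) = Suc (Max (insert 0 (ht ` fset a)))"
  by pat_completeness auto
termination
  by (relation "measure size") (auto intro: size_tm_fmember)

lemma ht_mem: "r \<in> fset a \<Longrightarrow> ht r < ht (Circ a \<sigma>)"
proof -
  assume "r \<in> fset a"
  then have "ht r \<le> Max (insert 0 (ht ` fset a))" by (intro Max_ge) auto
  then show ?thesis by simp
qed

lemma restr_rel_iff: "(x, y) \<in> restr_rel le A \<longleftrightarrow> x \<in> A \<and> y \<in> A \<and> le x y"
  unfolding restr_rel_def by simp

lemma Field_restr_sub: "Field (restr_rel le A) \<subseteq> A"
  unfolding Field_def restr_rel_def by blast

lemma Field_restr: "refl_on A (restr_rel le A) \<Longrightarrow> Field (restr_rel le A) = A"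
  using Field_restr_sub unfolding refl_on_def by (metis FieldI1 subsetI subset_antisym)

lemma po_restr: "partial_order_on A (restr_rel le A) \<Longrightarrow> po (restr_rel le A)"
  unfolding po_def using Field_restr partial_order_on_def preorder_on_def by metis

lemma restr_mono: "A \<subseteq> B \<Longrightarrow> restr_rel le A \<subseteq> restr_rel le B"
  unfolding restr_rel_def by blast

lemma Field_restr_mono: "A \<subseteq> B \<Longrightarrow> Field (restr_rel le A) \<subseteq> Field (restr_rel le B)"
  using restr_mono unfolding Field_def by blast

lemma emb_restr: "A \<subseteq> B \<Longrightarrow> emb (restr_rel le A) (restr_rel le B) id"
  unfolding emb_def using Field_restr_sub[of le A] Field_restr_mono[of A B le] by (auto simp: restr_rel_iff)

lemma qemb_restr: "A \<subseteq> B \<Longrightarrow> quasi_emb (restr_rel le A) (restr_rel le B) id"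
  unfolding quasi_emb_def using Field_restr_sub[of le A] Field_restr_mono[of A B le] by (auto simp: restr_rel_iff)

lemma po_restr_sub: assumes "partial_order_on B (restr_rel le B)" "A \<subseteq> B"
  shows "partial_order_on A (restr_rel le A)"
proof -
  have r: "refl_on B (restr_rel le B)" "trans (restr_rel le B)" "antisym (restr_rel le B)"
    using assms(1) unfolding partial_order_on_def preorder_on_def by auto
  show ?thesis unfolding partial_order_on_def preorder_on_def
  proof (intro conjI)
    show "restr_rel le A \<subseteq> A \<times> A" by (auto simp: restr_rel_iff)
    show "refl_on A (restr_rel le A)" using r(1) assms(2) unfolding refl_on_def by (auto simp: restr_rel_iff)
    show "trans (restr_rel le A)" using r(2) assms(2) unfolding trans_def by (auto simp: restr_rel_iff)
    show "antisym (restr_rel le A)" using r(3) assms(2) unfolding antisym_def by (auto simp: restr_rel_iff)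
  qed
qed

locale tw =
  fixes X :: "'x rel"
    and Wo :: "('x, 'w) tm rel \<Rightarrow> 'w rel"
    and Wm :: "('x, 'w) tm rel \<Rightarrow> ('x, 'w) tm rel \<Rightarrow> (('x, 'w) tm \<Rightarrow> ('x, 'w) tm) \<Rightarrow> 'w \<Rightarrow> 'w"
    and supp :: "('x, 'w) tm rel \<Rightarrow> 'w \<Rightarrow> ('x, 'w) tm set"
  assumes nd: "normal_PO_dilator Wo Wm supp"
    and poX: "po X"
begin

abbreviation "le \<equiv> twle X Wo Wm"
abbreviation "R A \<equiv> restr_rel le A"
abbreviation "M \<equiv> twmem X Wo Wm supp"
abbreviation "PO A \<equiv> partial_order_on A (R A)"
definition "WI A B \<sigma> = Wm (R A) (R B) id \<sigma>"

lemma D: "PO_dilator Wo Wm supp" using nd unfolding normal_PO_dilator_def by (elim conjE) blast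

lemma W_po: "po r \<Longrightarrow> po (Wo r)"
proof -
  have "\<forall>r. po r \<longrightarrow> po (Wo r)" using D unfolding PO_dilator_def by (elim conjE) assumption
  then show "po r \<Longrightarrow> po (Wo r)" by blast
qed
lemma W_qe: "po r \<Longrightarrow> po s \<Longrightarrow> quasi_emb r s f \<Longrightarrow> quasi_emb (Wo r) (Wo s) (Wm r s f)"
proof -
  have "\<forall>r s f. po r \<and> po s \<and> quasi_emb r s f \<longrightarrow> quasi_emb (Wo r) (Wo s) (Wm r s f)"
    using D unfolding PO_dilator_def by (elim conjE) assumption
  then show "po r \<Longrightarrow> po s \<Longrightarrow> quasi_emb r s f \<Longrightarrow> quasi_emb (Wo r) (Wo s) (Wm r s f)" by blast
qed
lemma W_idl: "po r \<Longrightarrow> \<sigma> \<in> Field (Wo r) \<Longrightarrow> Wm r r id \<sigma> = \<sigma>"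
proof -
  have "\<forall>r. po r \<longrightarrow> (\<forall>\<sigma>\<in>Field (Wo r). Wm r r id \<sigma> = \<sigma>)"
    using D unfolding PO_dilator_def by (elim conjE) assumption
  then show "po r \<Longrightarrow> \<sigma> \<in> Field (Wo r) \<Longrightarrow> Wm r r id \<sigma> = \<sigma>" by blast
qed
lemma W_comp: "po r \<Longrightarrow> po s \<Longrightarrow> po t \<Longrightarrow> quasi_emb r s f \<Longrightarrow> quasi_emb s t g \<Longrightarrow> \<sigma> \<in> Field (Wo r)
  \<Longrightarrow> Wm r t (g \<circ> f) \<sigma> = Wm s t g (Wm r s f \<sigma>)"
proof -
  have "\<forall>r s t f g. po r \<and> po s \<and> po t \<and> quasi_emb r s f \<and> quasi_emb s t g \<longrightarrow>
        (\<forall>\<sigma>\<in>Field (Wo r). Wm r t (g \<circ> f) \<sigma> = Wm s t g (Wm r s f \<sigma>))"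
    using D unfolding PO_dilator_def by (elim conjE) assumption
  then show "po r \<Longrightarrow> po s \<Longrightarrow> po t \<Longrightarrow> quasi_emb r s f \<Longrightarrow> quasi_emb s t g \<Longrightarrow> \<sigma> \<in> Field (Wo r)
  \<Longrightarrow> Wm r t (g \<circ> f) \<sigma> = Wm s t g (Wm r s f \<sigma>)" by blast
qed
lemma W_emb: "po r \<Longrightarrow> po s \<Longrightarrow> emb r s f \<Longrightarrow> emb (Wo r) (Wo s) (Wm r s f)"
proof -
  have "\<forall>r s f. po r \<and> po s \<and> emb r s f \<longrightarrow> emb (Wo r) (Wo s) (Wm r s f)"
    using D unfolding PO_dilator_def by (elim conjE) assumption
  then show "po r \<Longrightarrow> po s \<Longrightarrow> emb r s f \<Longrightarrow> emb (Wo r) (Wo s) (Wm r s f)" by blast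
qed
lemma W_supp: "po r \<Longrightarrow> po s \<Longrightarrow> quasi_emb r s f \<Longrightarrow> \<sigma> \<in> Field (Wo r) \<Longrightarrow> supp s (Wm r s f \<sigma>) = f ` supp r \<sigma>"
proof -
  have "\<forall>r s f. po r \<and> po s \<and> quasi_emb r s f \<longrightarrow>
        (\<forall>\<sigma>\<in>Field (Wo r). supp s (Wm r s f \<sigma>) = f ` supp r \<sigma>)"
    using D unfolding PO_dilator_def by (elim conjE) assumption
  then show "po r \<Longrightarrow> po s \<Longrightarrow> quasi_emb r s f \<Longrightarrow> \<sigma> \<in> Field (Wo r) \<Longrightarrow> supp s (Wm r s f \<sigma>) = f ` supp r \<sigma>" by blast
qed
lemma W_normal: "po r \<Longrightarrow> (\<sigma>, \<tau>) \<in> Wo r \<Longrightarrow> le_fin r (supp r \<sigma>) (supp r \<tau>)"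
proof -
  have "\<forall>r \<sigma> \<tau>. po r \<and> (\<sigma>, \<tau>) \<in> Wo r \<longrightarrow> le_fin r (supp r \<sigma>) (supp r \<tau>)"
    using nd unfolding normal_PO_dilator_def by (elim conjE) assumption
  then show "po r \<Longrightarrow> (\<sigma>, \<tau>) \<in> Wo r \<Longrightarrow> le_fin r (supp r \<sigma>) (supp r \<tau>)" by blast
qed

lemma WI_field: "PO A \<Longrightarrow> PO B \<Longrightarrow> A \<subseteq> B \<Longrightarrow> \<sigma> \<in> Field (Wo (R A)) \<Longrightarrow> WI A B \<sigma> \<in> Field (Wo (R B))"
  using W_qe[OF po_restr po_restr qemb_restr] unfolding quasi_emb_def WI_def by blast

lemma WI_supp: "PO A \<Longrightarrow> PO B \<Longrightarrow> A \<subseteq> B \<Longrightarrow> \<sigma> \<in> Field (Wo (R A)) \<Longrightarrow> supp (R B) (WI A B \<sigma>) = supp (R A) \<sigma>"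
  using W_supp[OF po_restr po_restr qemb_restr] unfolding WI_def by simp

lemma WI_id: "PO A \<Longrightarrow> \<sigma> \<in> Field (Wo (R A)) \<Longrightarrow> WI A A \<sigma> = \<sigma>"
  using W_idl[OF po_restr] unfolding WI_def by blast

lemma WI_comp: "PO A \<Longrightarrow> PO B \<Longrightarrow> PO C \<Longrightarrow> A \<subseteq> B \<Longrightarrow> B \<subseteq> C \<Longrightarrow> \<sigma> \<in> Field (Wo (R A))
   \<Longrightarrow> WI A C \<sigma> = WI B C (WI A B \<sigma>)"
proof -
  assume a: "PO A" "PO B" "PO C" "A \<subseteq> B" "B \<subseteq> C" "\<sigma> \<in> Field (Wo (R A))"
  have "Wm (R A) (R C) (id \<circ> id) \<sigma> = Wm (R B) (R C) id (Wm (R A) (R B) id \<sigma>)"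
    by (rule W_comp[OF po_restr[OF a(1)] po_restr[OF a(2)] po_restr[OF a(3)] qemb_restr[OF a(4)] qemb_restr[OF a(5)] a(6)])
  then show ?thesis unfolding WI_def by simp
qed

lemma WI_emb: "PO A \<Longrightarrow> PO B \<Longrightarrow> A \<subseteq> B \<Longrightarrow> \<sigma> \<in> Field (Wo (R A)) \<Longrightarrow> \<tau> \<in> Field (Wo (R A))
   \<Longrightarrow> (WI A B \<sigma>, WI A B \<tau>) \<in> Wo (R B) \<longleftrightarrow> (\<sigma>, \<tau>) \<in> Wo (R A)"
  using W_emb[OF po_restr po_restr emb_restr] unfolding emb_def WI_def by blast

lemma normal: "PO A \<Longrightarrow> (\<sigma>, \<tau>) \<in> Wo (R A) \<Longrightarrow> le_fin (R A) (supp (R A) \<sigma>) (supp (R A) \<tau>)"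
  using W_normal[OF po_restr] by blast

lemma M_Circ: assumes "M (Circ a \<sigma>)"
  shows "\<And>r. r \<in> fset a \<Longrightarrow> M r" "PO (fset a)" "\<sigma> \<in> Field (Wo (R (fset a)))"
    "supp (R (fset a)) \<sigma> = fset a"
  using assms by auto


lemma le_CC: "le (Circ a \<sigma>) (Circ b \<tau>) \<longleftrightarrow> (\<exists>t'\<in>fset b. le (Circ a \<sigma>) t') \<or>
   (PO (fset a \<union> fset b) \<and> (WI (fset a) (fset a \<union> fset b) \<sigma>, WI (fset b) (fset a \<union> fset b) \<tau>) \<in> Wo (R (fset a \<union> fset b)))"
  unfolding WI_def by simp

lemma le_BC: "le (Bar x) (Circ b \<tau>) \<longleftrightarrow> (\<exists>t'\<in>fset b. le (Bar x) t')"
  by simp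

lemma lefin: assumes "M (Circ a \<sigma>)" "M (Circ b \<tau>)" "PO (fset a \<union> fset b)"
  "(WI (fset a) (fset a \<union> fset b) \<sigma>, WI (fset b) (fset a \<union> fset b) \<tau>) \<in> Wo (R (fset a \<union> fset b))"
  shows "\<forall>x\<in>fset a. \<exists>y\<in>fset b. le x y"
proof -
  note ma = M_Circ[OF assms(1)] and mb = M_Circ[OF assms(2)]
  have "le_fin (R (fset a \<union> fset b)) (supp (R (fset a \<union> fset b)) (WI (fset a) (fset a \<union> fset b) \<sigma>))
     (supp (R (fset a \<union> fset b)) (WI (fset b) (fset a \<union> fset b) \<tau>))"
    by (rule normal[OF assms(3,4)])
  moreover have "supp (R (fset a \<union> fset b)) (WI (fset a) (fset a \<union> fset b) \<sigma>) = fset a"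
    using WI_supp[OF ma(2) assms(3) _ ma(3)] ma(4) by (metis Un_upper1)
  moreover have "supp (R (fset a \<union> fset b)) (WI (fset b) (fset a \<union> fset b) \<tau>) = fset b"
    using WI_supp[OF mb(2) assms(3) _ mb(3)] mb(4) by (metis Un_upper2)
  ultimately have "\<forall>x\<in>fset a. \<exists>y\<in>fset b. (x, y) \<in> R (fset a \<union> fset b)" unfolding le_fin_def by simp
  then show ?thesis unfolding restr_rel_iff by blast
qed

lemma Max_mono_ex: fixes f g :: "'a \<Rightarrow> nat"
  assumes "\<forall>x\<in>A. \<exists>y\<in>B. f x \<le> g y" "finite A" "finite B"
  shows "Max (insert 0 (f ` A)) \<le> Max (insert 0 (g ` B))"
proof (rule Max.boundedI)
  show "finite (insert 0 (f ` A))" using assms by simp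
  show "insert 0 (f ` A) \<noteq> {}" by simp
  fix z assume "z \<in> insert 0 (f ` A)"
  then consider "z = 0" | x where "x \<in> A" "z = f x" by blast
  then show "z \<le> Max (insert 0 (g ` B))"
  proof cases
    case 1 then show ?thesis by simp
  next
    case 2
    then obtain y where y: "y \<in> B" "f x \<le> g y" using assms(1) by blast
    have "g y \<le> Max (insert 0 (g ` B))" using y(1) assms(3) by (intro Max_ge) simp_all
    then show ?thesis using 2 y by simp
  qed
qed

lemma ht_mono: "M t \<Longrightarrow> M s \<Longrightarrow> le s t \<Longrightarrow> ht s \<le> ht t"
proof (induction t arbitrary: s)
  case (Bar y)
  then show ?case by (cases s) simp_all
next
  case (Circ b \<tau>)
  show ?case
  proof (cases s)
    case (Bar x)
    then show ?thesis by simp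
  next
    case (Circ a \<sigma>)
    from Circ.prems(3) consider (ii) t' where "t' \<in> fset b" "le s t'"
      | (iii) "PO (fset a \<union> fset b)" "(WI (fset a) (fset a \<union> fset b) \<sigma>, WI (fset b) (fset a \<union> fset b) \<tau>) \<in> Wo (R (fset a \<union> fset b))"
      unfolding Circ le_CC by blast
    then show ?thesis
    proof cases
      case ii
      have "ht s \<le> ht t'" using Circ.IH[OF ii(1) _ Circ.prems(2) ii(2)] M_Circ[OF Circ.prems(1)] ii(1) by blast
      also have "\<dots> < ht (Circ b \<tau>)" using ii(1) by (rule ht_mem)
      finally show ?thesis by simp
    next
      case iii
      have lf: "\<forall>x\<in>fset a. \<exists>y\<in>fset b. le x y"
        using lefin[OF _ Circ.prems(1) iii] Circ.prems(2) unfolding Circ by blast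
      have "\<forall>x\<in>fset a. \<exists>y\<in>fset b. ht x \<le> ht y"
      proof
        fix x assume x: "x \<in> fset a"
        then obtain y where y: "y \<in> fset b" "le x y" using lf by blast
        have "ht x \<le> ht y"
          using Circ.IH[OF y(1) _ _ y(2)] M_Circ[OF Circ.prems(1)] M_Circ(1)[OF Circ.prems(2)[unfolded Circ]] x y(1) by blast
        then show "\<exists>y\<in>fset b. ht x \<le> ht y" using y by blast
      qed
      then have "Max (insert 0 (ht ` fset a)) \<le> Max (insert 0 (ht ` fset b))"
        by (rule Max_mono_ex) simp_all
      then show ?thesis unfolding Circ by simp
    qed
  qed
qed

lemma sub_not_le: "M (Circ b \<tau>) \<Longrightarrow> t' \<in> fset b \<Longrightarrow> \<not> le (Circ b \<tau>) t'"
proof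
  assume a: "M (Circ b \<tau>)" "t' \<in> fset b" "le (Circ b \<tau>) t'"
  have "ht (Circ b \<tau>) \<le> ht t'" by (rule ht_mono[OF M_Circ(1)[OF a(1,2)] a(1) a(3)])
  then show False using ht_mem[OF a(2), of \<tau>] by simp
qed

lemma twle_refl: "M s \<Longrightarrow> le s s"
proof (cases s)
  case (Bar x)
  assume "M s"
  then have "x \<in> Field X" unfolding Bar by simp
  moreover have "refl_on (Field X) X" using poX unfolding po_def partial_order_on_def preorder_on_def by blast
  ultimately have "(x, x) \<in> X" unfolding refl_on_def by blast
  then show ?thesis unfolding Bar by simp
next
  case (Circ a \<sigma>)
  assume "M s"
  note m = M_Circ[OF this[unfolded Circ]]
  have "po (Wo (R (fset a)))" by (rule W_po[OF po_restr[OF m(2)]])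
  then have "(\<sigma>, \<sigma>) \<in> Wo (R (fset a))" using m(3) unfolding po_def partial_order_on_def preorder_on_def refl_on_def by blast
  then have "(WI (fset a) (fset a) \<sigma>, WI (fset a) (fset a) \<sigma>) \<in> Wo (R (fset a))"
    using WI_id[OF m(2) m(3)] by simp
  then show ?thesis unfolding Circ le_CC using m(2) by simp
qed

lemma twle_antisym: "M s \<Longrightarrow> M t \<Longrightarrow> le s t \<Longrightarrow> le t s \<Longrightarrow> s = t"
proof (cases s; cases t)
  fix x y assume "s = Bar x" "t = Bar y" "le s t" "le t s"
  moreover have "antisym X" using poX unfolding po_def partial_order_on_def by blast
  ultimately show "s = t" unfolding antisym_def by simp
next
  fix x b \<tau> assume "s = Bar x" "t = Circ b \<tau>" "le t s" then show "s = t" by simp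
next
  fix a \<sigma> y assume "s = Circ a \<sigma>" "t = Bar y" "le s t" then show "s = t" by simp
next
  fix a \<sigma> b \<tau> assume s: "s = Circ a \<sigma>" and t: "t = Circ b \<tau>" and st: "M s" "M t" "le s t" "le t s"
  note ma = M_Circ[OF st(1)[unfolded s]] and mb = M_Circ[OF st(2)[unfolded t]]
  have hst: "ht s = ht t" using ht_mono[OF st(2) st(1) st(3)] ht_mono[OF st(1) st(2) st(4)] by simp
  have no1: "\<not> (\<exists>t'\<in>fset b. le s t')"
  proof
    assume "\<exists>t'\<in>fset b. le s t'"
    then obtain t' where t': "t' \<in> fset b" "le s t'" by blast
    have "ht s \<le> ht t'" by (rule ht_mono[OF mb(1)[OF t'(1)] st(1) t'(2)])
    then show False using ht_mem[OF t'(1), of \<tau>] hst t by simp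
  qed
  have no2: "\<not> (\<exists>t'\<in>fset a. le t t')"
  proof
    assume "\<exists>t'\<in>fset a. le t t'"
    then obtain t' where t': "t' \<in> fset a" "le t t'" by blast
    have "ht t \<le> ht t'" by (rule ht_mono[OF ma(1)[OF t'(1)] st(2) t'(2)])
    then show False using ht_mem[OF t'(1), of \<sigma>] hst s by simp
  qed
  define U where "U = fset a \<union> fset b"
  have U2: "fset b \<union> fset a = U" unfolding U_def by auto
  from st(3) no1 have i1: "PO U" "(WI (fset a) U \<sigma>, WI (fset b) U \<tau>) \<in> Wo (R U)"
    unfolding s t le_CC U_def by auto
  from st(4) no2 have i2: "(WI (fset b) U \<tau>, WI (fset a) U \<sigma>) \<in> Wo (R U)"
    unfolding s t le_CC U2 by auto
  have "antisym (Wo (R U))" using W_po[OF po_restr[OF i1(1)]] unfolding po_def partial_order_on_def by blast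
  then have eq: "WI (fset a) U \<sigma> = WI (fset b) U \<tau>" using i1(2) i2 unfolding antisym_def by blast
  have sa: "supp (R U) (WI (fset a) U \<sigma>) = fset a"
    using WI_supp[OF ma(2) i1(1) _ ma(3)] ma(4) unfolding U_def by (metis Un_upper1)
  have sb: "supp (R U) (WI (fset b) U \<tau>) = fset b"
    using WI_supp[OF mb(2) i1(1) _ mb(3)] mb(4) unfolding U_def by (metis Un_upper2)
  have "fset a = fset b" using sa sb eq by simp
  then have ab: "a = b" by (simp add: fset_inject)
  have "\<sigma> = WI (fset a) U \<sigma>" unfolding U_def ab using WI_id[OF mb(2) ma(3)[unfolded ab]] by simp
  also have "\<dots> = WI (fset b) U \<tau>" by (rule eq)
  also have "\<dots> = \<tau>" unfolding U_def ab using WI_id[OF mb(2) mb(3)] by simp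
  finally have "\<sigma> = \<tau>" .
  then show "s = t" using s t ab by simp
qed

lemma le_trans_aux0:
  "\<forall>s t. M s \<longrightarrow> M t \<longrightarrow> M u \<longrightarrow> le s t \<longrightarrow> le t u \<longrightarrow> le s u"
proof (induction "ht u" arbitrary: u rule: less_induct)
  case less
  show ?case
  proof (intro allI impI)
  fix s t assume Ms: "M s" and Mt: "M t" and Mu: "M u" and st: "le s t" and tu: "le t u"
  show "le s u"
  proof (cases u)
    case (Bar z)
    obtain y where ty: "t = Bar y" using tu unfolding Bar by (cases t) simp_all
    obtain x where sx: "s = Bar x" using st unfolding ty by (cases s) simp_all
    have "trans X" using poX unfolding po_def partial_order_on_def preorder_on_def by blast
    moreover have "(x, y) \<in> X" "(y, z) \<in> X" using st tu unfolding Bar ty sx by simp_all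
    ultimately have "(x, z) \<in> X" by (rule transD)
    then show ?thesis unfolding Bar sx by simp
  next
    case (Circ c \<rho>)
    note mc = M_Circ[OF Mu[unfolded Circ]]
    have IH: "\<And>u'. u' \<in> fset c \<Longrightarrow> \<forall>s t. M s \<longrightarrow> M t \<longrightarrow> le s t \<longrightarrow> le t u' \<longrightarrow> le s u'"
    proof -
      fix u' assume u': "u' \<in> fset c"
      have "ht u' < ht u" unfolding Circ by (rule ht_mem[OF u'])
      from less.hyps[OF this] mc(1)[OF u'] show "\<forall>s t. M s \<longrightarrow> M t \<longrightarrow> le s t \<longrightarrow> le t u' \<longrightarrow> le s u'" by simp
    qed
    have lift: "le s u" if u': "u' \<in> fset c" "le s u'" for u'
    proof (cases s)
      case (Bar x)
      then show ?thesis using u' unfolding \<open>u = Circ c \<rho>\<close> Bar le_BC by blast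
    next
      case (Circ a \<sigma>)
      then show ?thesis using u' unfolding \<open>u = Circ c \<rho>\<close> Circ le_CC by blast
    qed
    show ?thesis
    proof (cases "\<exists>u'\<in>fset c. le t u'")
      case True
      then obtain u' where u': "u' \<in> fset c" "le t u'" by blast
      then have "le s u'" using IH[OF u'(1)] Ms Mt st by blast
      then show ?thesis using lift u'(1) by blast
    next
      case False
      obtain b \<tau> where tb: "t = Circ b \<tau>"
      proof (cases t)
        case (Bar y)
        then show ?thesis using tu False unfolding Circ Bar le_BC by blast
      next
        case (Circ b \<tau>)
        then show ?thesis using that by blast
      qed
      note mb = M_Circ[OF Mt[unfolded tb]]
      from tu False have iii: "PO (fset b \<union> fset c)"
        "(WI (fset b) (fset b \<union> fset c) \<tau>, WI (fset c) (fset b \<union> fset c) \<rho>) \<in> Wo (R (fset b \<union> fset c))"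
        unfolding tb Circ le_CC by auto
      have lf: "\<forall>x\<in>fset b. \<exists>y\<in>fset c. le x y"
        using lefin[OF Mt[unfolded tb] Mu[unfolded Circ] iii] .
      have via: "le s u" if t': "t' \<in> fset b" "le s t'" for t'
      proof -
        obtain u' where u': "u' \<in> fset c" "le t' u'" using lf t'(1) by blast
        have "le s u'" using IH[OF u'(1)] Ms mb(1)[OF t'(1)] t'(2) u'(2) by blast
        then show ?thesis using lift u'(1) by blast
      qed
      show ?thesis
      proof (cases s)
        case (Bar x)
        then show ?thesis using st via unfolding tb Bar le_BC by blast
      next
        case sa: (Circ a \<sigma>)
        note ma = M_Circ[OF Ms[unfolded sa]]
        show ?thesis
        proof (cases "\<exists>t'\<in>fset b. le s t'")
          case True
          then show ?thesis using via by blast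
        next
          case False
          from st False have ii: "PO (fset a \<union> fset b)"
            "(WI (fset a) (fset a \<union> fset b) \<sigma>, WI (fset b) (fset a \<union> fset b) \<tau>) \<in> Wo (R (fset a \<union> fset b))"
            unfolding tb sa le_CC by auto
          define D where "D = fset a \<union> fset b \<union> fset c"
          have hts: "ht s \<le> ht t" by (rule ht_mono[OF Mt Ms st])
          have htt: "ht t \<le> ht u" by (rule ht_mono[OF Mu Mt tu])
          have hD: "ht z < ht u" if zD: "z \<in> D" for z
          proof -
            consider "z \<in> fset a" | "z \<in> fset b" | "z \<in> fset c" using zD unfolding D_def by blast
            then show ?thesis
            proof cases
              case 1 then show ?thesis using ht_mem[OF 1, of \<sigma>] hts htt sa by simp
            next
              case 2 then show ?thesis using ht_mem[OF 2, of \<tau>] htt tb by simp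
            next
              case 3 then show ?thesis using ht_mem[OF 3, of \<rho>] Circ by simp
            qed
          qed
          have MD: "M z" if "z \<in> D" for z
            using that ma(1) mb(1) mc(1) unfolding D_def by blast
          have PD: "PO D" unfolding partial_order_on_def preorder_on_def
          proof (intro conjI)
            show "R D \<subseteq> D \<times> D" by (auto simp: restr_rel_iff)
            show "refl_on D (R D)" unfolding refl_on_def restr_rel_iff using MD twle_refl by blast
            show "antisym (R D)" unfolding antisym_def restr_rel_iff using MD twle_antisym by blast
            show "trans (R D)" unfolding trans_def restr_rel_iff
            proof (intro allI impI)
              fix x y z assume "x \<in> D \<and> y \<in> D \<and> le x y" "y \<in> D \<and> z \<in> D \<and> le y z"
              then have h: "x \<in> D" "y \<in> D" "z \<in> D" "le x y" "le y z" by auto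
              have "le x z" using less.hyps[OF hD[OF h(3)]] MD[OF h(1)] MD[OF h(2)] MD[OF h(3)] h(4,5) by simp
              then show "x \<in> D \<and> z \<in> D \<and> le x z" using h by blast
            qed
          qed
          define E where "E = fset a \<union> fset c"
          have PE: "PO E" by (rule po_restr_sub[OF PD]) (auto simp: D_def E_def)
          have sub: "fset a \<union> fset b \<subseteq> D" "fset b \<union> fset c \<subseteq> D" "E \<subseteq> D"
            "fset a \<subseteq> fset a \<union> fset b" "fset b \<subseteq> fset a \<union> fset b"
            "fset b \<subseteq> fset b \<union> fset c" "fset c \<subseteq> fset b \<union> fset c"
            "fset a \<subseteq> E" "fset c \<subseteq> E"
            unfolding D_def E_def by auto
          have f1: "WI (fset a) (fset a \<union> fset b) \<sigma> \<in> Field (Wo (R (fset a \<union> fset b)))"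
            by (rule WI_field[OF ma(2) ii(1) sub(4) ma(3)])
          have f2: "WI (fset b) (fset a \<union> fset b) \<tau> \<in> Field (Wo (R (fset a \<union> fset b)))"
            by (rule WI_field[OF mb(2) ii(1) sub(5) mb(3)])
          have f3: "WI (fset b) (fset b \<union> fset c) \<tau> \<in> Field (Wo (R (fset b \<union> fset c)))"
            by (rule WI_field[OF mb(2) iii(1) sub(6) mb(3)])
          have f4: "WI (fset c) (fset b \<union> fset c) \<rho> \<in> Field (Wo (R (fset b \<union> fset c)))"
            by (rule WI_field[OF mc(2) iii(1) sub(7) mc(3)])
          have f5: "WI (fset a) E \<sigma> \<in> Field (Wo (R E))"
            by (rule WI_field[OF ma(2) PE sub(8) ma(3)])
          have f6: "WI (fset c) E \<rho> \<in> Field (Wo (R E))"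
            by (rule WI_field[OF mc(2) PE sub(9) mc(3)])
          have c1: "WI (fset a) D \<sigma> = WI (fset a \<union> fset b) D (WI (fset a) (fset a \<union> fset b) \<sigma>)"
            by (rule WI_comp[OF ma(2) ii(1) PD sub(4) sub(1) ma(3)])
          have c2: "WI (fset b) D \<tau> = WI (fset a \<union> fset b) D (WI (fset b) (fset a \<union> fset b) \<tau>)"
            by (rule WI_comp[OF mb(2) ii(1) PD sub(5) sub(1) mb(3)])
          have c3: "WI (fset b) D \<tau> = WI (fset b \<union> fset c) D (WI (fset b) (fset b \<union> fset c) \<tau>)"
            by (rule WI_comp[OF mb(2) iii(1) PD sub(6) sub(2) mb(3)])
          have c4: "WI (fset c) D \<rho> = WI (fset b \<union> fset c) D (WI (fset c) (fset b \<union> fset c) \<rho>)"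
            by (rule WI_comp[OF mc(2) iii(1) PD sub(7) sub(2) mc(3)])
          have c5: "WI (fset a) D \<sigma> = WI E D (WI (fset a) E \<sigma>)"
            by (rule WI_comp[OF ma(2) PE PD sub(8) sub(3) ma(3)])
          have c6: "WI (fset c) D \<rho> = WI E D (WI (fset c) E \<rho>)"
            by (rule WI_comp[OF mc(2) PE PD sub(9) sub(3) mc(3)])
          have r1: "(WI (fset a) D \<sigma>, WI (fset b) D \<tau>) \<in> Wo (R D)"
            unfolding c1 c2 using WI_emb[OF ii(1) PD sub(1) f1 f2] ii(2) by blast
          have r2: "(WI (fset b) D \<tau>, WI (fset c) D \<rho>) \<in> Wo (R D)"
            unfolding c3 c4 using WI_emb[OF iii(1) PD sub(2) f3 f4] iii(2) by blast
          have "trans (Wo (R D))" using W_po[OF po_restr[OF PD]] unfolding po_def partial_order_on_def preorder_on_def by blast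
          then have r3: "(WI (fset a) D \<sigma>, WI (fset c) D \<rho>) \<in> Wo (R D)" using r1 r2 by (meson transD)
          have r4: "(WI (fset a) E \<sigma>, WI (fset c) E \<rho>) \<in> Wo (R E)"
            using r3 unfolding c5 c6 using WI_emb[OF PE PD sub(3) f5 f6] by blast
          show ?thesis unfolding sa Circ le_CC using PE r4 unfolding E_def by blast
        qed
      qed
    qed
  qed
  qed
qed

lemma le_trans_aux: "M s \<Longrightarrow> M t \<Longrightarrow> M u \<Longrightarrow> le s t \<Longrightarrow> le t u \<Longrightarrow> le s u"
  using le_trans_aux0 by blast

end

theorem proposition2p6:
  fixes X :: "'x rel"
    and Wo :: "('x, 'w) tm rel \<Rightarrow> 'w rel"
    and Wm :: "('x, 'w) tm rel \<Rightarrow> ('x, 'w) tm rel \<Rightarrow> (('x, 'w) tm \<Rightarrow> ('x, 'w) tm) \<Rightarrow> 'w \<Rightarrow> 'w"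
    and supp :: "('x, 'w) tm rel \<Rightarrow> 'w \<Rightarrow> ('x, 'w) tm set"
  assumes "normal_PO_dilator Wo Wm supp"
    and "po X"
  shows "partial_order_on (TW X Wo Wm supp) (TW_le X Wo Wm supp)"
proof -
  interpret tw X Wo Wm supp using assms by unfold_locales
  have iff: "\<And>s t. (s, t) \<in> TW_le X Wo Wm supp \<longleftrightarrow> M s \<and> M t \<and> le s t"
    unfolding TW_le_def TW_def by simp
  have mem: "\<And>s. s \<in> TW X Wo Wm supp \<longleftrightarrow> M s" unfolding TW_def by simp
  show ?thesis unfolding partial_order_on_def preorder_on_def
  proof (intro conjI)
    show "TW_le X Wo Wm supp \<subseteq> TW X Wo Wm supp \<times> TW X Wo Wm supp"
      using iff mem by auto
    show "refl_on (TW X Wo Wm supp) (TW_le X Wo Wm supp)"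
      unfolding refl_on_def iff using twle_refl mem by blast
    show "trans (TW_le X Wo Wm supp)"
    proof (rule transI)
      fix x y z assume "(x, y) \<in> TW_le X Wo Wm supp" "(y, z) \<in> TW_le X Wo Wm supp"
      then show "(x, z) \<in> TW_le X Wo Wm supp" unfolding iff using le_trans_aux by metis
    qed
    show "antisym (TW_le X Wo Wm supp)"
    proof (rule antisymI)
      fix x y assume "(x, y) \<in> TW_le X Wo Wm supp" "(y, x) \<in> TW_le X Wo Wm supp"
      then show "x = y" unfolding iff using twle_antisym by metis
    qed
  qed
qed

end
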